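(* Let $X$ be a complex manifold of complex dimension $3$ with a nowhere vanishing holomorphic $(3,0)$-form $\Omega$ and a Hermitian metric $\omega$. At a point $x\in X$, let $\xi$ be a covector (with $(1,0)$-part also denoted $\xi$ and $(0,1)$-part $\bar\xi$) and let $\delta\Psi$ be a Hermitian $(2,2)$-form at $x$ lying in the kernel of the principal symbol of the exterior derivative $d$ on $(2,2)$-forms at $\xi$ (i.e. $\xi\wedge\delta\Psi=0$ and $\bar\xi\wedge\delta\Psi=0$). Then $$i\,\xi\wedge\bar\xi\wedge\tilde\star\,\delta\Psi=\frac{1}{2\|\Omega\|_\omega}|\xi|^2\,\delta\Psi,$$ where $|\xi|$ is the norm of $\xi$ with respect to $\omega$.
   Context: Write $\omega=i\omega_{\bar kj}dz^j\wedge d\bar z^k$; locally $\Omega=\Omega(z)dz^1\wedge dz^2\wedge dz^3$ and $\|\Omega\|_\omega=(|\Omega(z)|^2/\det\omega_{\bar kj})^{1/2}$. The Hodge star $\star=\star_\omega$ sends $(2,2)$-forms to $(1,1)$-forms via $\phi\wedge\overline{\Psi}=\frac{\langle\phi,\star\Psi\rangle_\omega}{3!}\omega^3$ for all $(1,1)$-forms $\phi$, with $\langle\cdot,\cdot\rangle_\omega$ the inner product induced by $\omega$. The operator $\tilde\star$ from $(2,2)$-forms to $(1,1)$-forms is $\tilde\star\,\delta\Psi=\frac{1}{2\|\Omega\|_\omega}\big(\langle\star\delta\Psi,\omega\rangle\omega-\star\delta\Psi\big)$. *)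

theory Defs
  imports "HOL-Analysis.Analysis"
begin

text \<open>Pointwise linear algebra at a point x of a complex 3-fold, in holomorphic
coordinates z^1,z^2,z^3 at x.  Complex-valued exterior forms at x are
functions from finite sets of generator indices to their coefficients:
generator j (j<3) is dz^(j+1), generator j+3 (j<3) is the conjugate of dz^(j+1);
alpha S is the coefficient of the increasing wedge of the generators in S.\<close>

type_synonym cform = "nat set \<Rightarrow> complex"

definition smult :: "complex \<Rightarrow> cform \<Rightarrow> cform" where
  "smult c \<alpha> = (\<lambda>S. c * \<alpha> S)"

definition shuffle_sign :: "nat set \<Rightarrow> nat set \<Rightarrow> complex" where
  "shuffle_sign A B = (-1) ^ card {(a, b). a \<in> A \<and> b \<in> B \<and> b < a}"

definition wedge :: "cform \<Rightarrow> cform \<Rightarrow> cform" where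
  "wedge \<alpha> \<beta> = (\<lambda>S. \<Sum>A\<in>Pow S. shuffle_sign A (S - A) * \<alpha> A * \<beta> (S - A))"

text \<open>complex conjugation on generators: dz^j <-> conj dz^j\<close>
definition csig :: "nat \<Rightarrow> nat" where
  "csig a = (if a < 3 then a + 3 else a - 3)"

definition conjf :: "cform \<Rightarrow> cform" where
  "conjf \<alpha> = (\<lambda>T. if T \<subseteq> {0..<6} then
      (let S = csig ` T in
        (-1) ^ card {(p, q). p \<in> S \<and> q \<in> S \<and> p < q \<and> csig q < csig p} * cnj (\<alpha> S))
      else 0)"

definition has_bidegree :: "nat \<Rightarrow> nat \<Rightarrow> cform \<Rightarrow> bool" where
  "has_bidegree p q \<alpha> \<longleftrightarrow> (\<forall>S. \<alpha> S \<noteq> 0 \<longrightarrow>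
      S \<subseteq> {0..<6} \<and> card (S \<inter> {0..<3}) = p \<and> card (S \<inter> {3..<6}) = q)"

definition real_form :: "cform \<Rightarrow> bool" where
  "real_form \<alpha> \<longleftrightarrow> conjf \<alpha> = \<alpha>"

definition idx :: "nat \<Rightarrow> 3" where
  "idx j = of_nat j"

text \<open>W \$ idx k \$ idx j is the coefficient omega_{bar k j}:
  omega = i * sum omega_{bar k j} dz^j wedge conj(dz^k).
  Hermitian metric: Hermitian, positive definite matrix.\<close>
definition hermitian_metric :: "complex^3^3 \<Rightarrow> bool" where
  "hermitian_metric W \<longleftrightarrow> (\<forall>a b. W $ a $ b = cnj (W $ b $ a)) \<and>
     (\<forall>v::complex^3. v \<noteq> 0 \<longrightarrow> 0 < Re (\<Sum>a\<in>UNIV. \<Sum>b\<in>UNIV. W $ a $ b * v $ b * cnj (v $ a)))"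

definition omega :: "complex^3^3 \<Rightarrow> cform" where
  "omega W = (\<lambda>S. \<Sum>j<3. \<Sum>k<3. if S = {j, k + 3} then \<i> * W $ idx k $ idx j else 0)"

definition ginv :: "complex^3^3 \<Rightarrow> nat \<Rightarrow> nat \<Rightarrow> complex" where
  "ginv W j l = matrix_inv W $ idx j $ idx l"

definition coef11 :: "cform \<Rightarrow> nat \<Rightarrow> nat \<Rightarrow> complex" where
  "coef11 \<phi> j k = \<phi> {j, k + 3}"

definition inner11 :: "complex^3^3 \<Rightarrow> cform \<Rightarrow> cform \<Rightarrow> complex" where
  "inner11 W \<phi> \<psi> = (\<Sum>j<3. \<Sum>k<3. \<Sum>l<3. \<Sum>m<3.
      ginv W j l * ginv W m k * coef11 \<phi> j k * cnj (coef11 \<psi> l m))"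

definition omega3 :: "complex^3^3 \<Rightarrow> cform" where
  "omega3 W = wedge (omega W) (wedge (omega W) (omega W))"

definition hodge :: "complex^3^3 \<Rightarrow> cform \<Rightarrow> cform" where
  "hodge W \<Psi> = (THE ch. has_bidegree 1 1 ch \<and>
      (\<forall>\<phi>. has_bidegree 1 1 \<phi> \<longrightarrow>
         wedge \<phi> (conjf \<Psi>) = smult (inner11 W \<phi> ch / 6) (omega3 W)))"

text \<open>norm of Omega = Omega(z) dz^1 dz^2 dz^3 at x\<close>
definition Omega_norm :: "complex^3^3 \<Rightarrow> complex \<Rightarrow> real" where
  "Omega_norm W \<Omega> = sqrt ((cmod \<Omega>)\<^sup>2 / Re (det W))"

definition tstar :: "complex^3^3 \<Rightarrow> complex \<Rightarrow> cform \<Rightarrow> cform" where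
  "tstar W \<Omega> \<Psi> = smult (1 / (2 * complex_of_real (Omega_norm W \<Omega>)))
      (\<lambda>S. inner11 W (hodge W \<Psi>) (omega W) * omega W S - hodge W \<Psi> S)"

definition covec_norm2 :: "complex^3^3 \<Rightarrow> cform \<Rightarrow> real" where
  "covec_norm2 W \<xi> = Re (\<Sum>j<3. \<Sum>l<3. ginv W j l * \<xi> {j} * cnj (\<xi> {l}))"

end

theory Submission
  imports Defs
begin

lemma card_pairs:
  assumes "finite A" "finite B"
  shows "card {(a, b). a \<in> A \<and> b \<in> B \<and> R a b} = (\<Sum>a\<in>A. \<Sum>b\<in>B. if R a b then 1 else 0)"
proof -
  have e: "{(a, b). a \<in> A \<and> b \<in> B \<and> R a b} = Sigma A (\<lambda>a. {b\<in>B. R a b})" by auto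
  have "card (Sigma A (\<lambda>a. {b\<in>B. R a b})) = (\<Sum>a\<in>A. card {b\<in>B. R a b})"
    using assms by (simp add: card_SigmaI)
  also have "\<dots> = (\<Sum>a\<in>A. \<Sum>b\<in>B. if R a b then 1 else 0)"
    using assms by (intro sum.cong refl, subst sum.inter_filter[symmetric]) auto
  finally show ?thesis using e by simp
qed

lemma shuffle_sign_eval:
  "finite A \<Longrightarrow> finite B \<Longrightarrow> shuffle_sign A B = (-1) ^ (\<Sum>a\<in>A. \<Sum>b\<in>B. if b < a then 1 else 0)"
  unfolding shuffle_sign_def by (simp add: card_pairs)

lemma wedge_nz:
  assumes "wedge \<alpha> \<beta> S \<noteq> 0"
  shows "\<exists>A\<subseteq>S. \<alpha> A \<noteq> 0 \<and> \<beta> (S - A) \<noteq> 0"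
proof (rule ccontr)
  assume "\<not> ?thesis"
  then have "\<forall>A\<in>Pow S. shuffle_sign A (S - A) * \<alpha> A * \<beta> (S - A) = 0" by auto
  then have "wedge \<alpha> \<beta> S = 0" unfolding wedge_def by (simp add: sum.neutral)
  with assms show False by simp
qed

definition setbideg :: "nat \<Rightarrow> nat \<Rightarrow> nat set \<Rightarrow> bool" where
  "setbideg p q S \<longleftrightarrow> S \<subseteq> {0..<6} \<and> card (S \<inter> {0..<3}) = p \<and> card (S \<inter> {3..<6}) = q"

lemma has_bidegree_iff: "has_bidegree p q \<alpha> \<longleftrightarrow> (\<forall>S. \<alpha> S \<noteq> 0 \<longrightarrow> setbideg p q S)"
  unfolding has_bidegree_def setbideg_def by simp

lemma wedge_bideg:
  assumes "has_bidegree p q \<alpha>" "has_bidegree p' q' \<beta>"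
  shows "has_bidegree (p + p') (q + q') (wedge \<alpha> \<beta>)"
  unfolding has_bidegree_iff
proof (intro allI impI)
  fix S assume "wedge \<alpha> \<beta> S \<noteq> 0"
  then obtain A where A: "A \<subseteq> S" "\<alpha> A \<noteq> 0" "\<beta> (S - A) \<noteq> 0" using wedge_nz by blast
  have a: "setbideg p q A" and b: "setbideg p' q' (S - A)"
    using A assms unfolding has_bidegree_iff by auto
  have S: "S = A \<union> (S - A)" using A by auto
  have fA: "finite A" and fB: "finite (S - A)" using a b unfolding setbideg_def
    by (auto intro: finite_subset)
  have c: "card ((A \<union> (S - A)) \<inter> X) = card (A \<inter> X) + card ((S - A) \<inter> X)" for X
  proof -
    have "(A \<union> (S - A)) \<inter> X = (A \<inter> X) \<union> ((S - A) \<inter> X)" by auto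
    moreover have "(A \<inter> X) \<inter> ((S - A) \<inter> X) = {}" by auto
    ultimately show ?thesis using fA fB by (simp add: card_Un_disjoint)
  qed
  show "setbideg (p + p') (q + q') S"
  proof -
    have "S \<subseteq> {0..<6}" using a b S unfolding setbideg_def by blast
    moreover have "card (S \<inter> {0..<3}) = p + p'" using a b c[of "{0..<3}"] S unfolding setbideg_def by simp
    moreover have "card (S \<inter> {3..<6}) = q + q'" using a b c[of "{3..<6}"] S unfolding setbideg_def by simp
    ultimately show ?thesis unfolding setbideg_def by simp
  qed
qed

lemma wedge_supp:
  assumes "finite F" "\<And>A. \<alpha> A \<noteq> 0 \<Longrightarrow> A \<in> F" "finite S"
  shows "wedge \<alpha> \<beta> S = (\<Sum>A\<in>F. if A \<subseteq> S then shuffle_sign A (S - A) * \<alpha> A * \<beta> (S - A) else 0)"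
proof -
  let ?f = "\<lambda>A. shuffle_sign A (S - A) * \<alpha> A * \<beta> (S - A)"
  have "wedge \<alpha> \<beta> S = (\<Sum>A\<in>Pow S. ?f A)" unfolding wedge_def ..
  also have "\<dots> = (\<Sum>A\<in>Pow S \<inter> F. ?f A)"
    by (rule sum.mono_neutral_right) (use assms in auto)
  also have "\<dots> = (\<Sum>A\<in>F. if A \<in> Pow S then ?f A else 0)"
    using assms by (simp add: sum.inter_restrict Int_commute)
  finally show ?thesis by simp
qed

definition toN :: "3 \<Rightarrow> nat" where "toN a = (if a = 1 then 1 else if a = 2 then 2 else 0)"

lemma toN_simps [simp]: "toN 0 = 0" "toN 1 = 1" "toN 2 = 2" "toN 3 = 0"
  by (simp_all add: toN_def)

lemma toN_lt [simp]: "toN a < 3"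
  by (simp add: toN_def)

lemma toN_inj [simp]: "toN a = toN b \<longleftrightarrow> a = b"
  using exhaust_3[of a] exhaust_3[of b] by auto

lemma toN_surj: "x < 3 \<Longrightarrow> \<exists>a. toN a = x"
proof -
  assume "x < 3"
  then have "x = 0 \<or> x = 1 \<or> x = 2" by auto
  then show ?thesis by (metis toN_simps(1,2,3))
qed

definition eset :: "3 \<Rightarrow> 3 \<Rightarrow> nat set" where "eset a b = {toN a, toN b + 3}"
definition nset :: "3 \<Rightarrow> 3 \<Rightarrow> nat set" where "nset a b = {0..<6} - eset a b"
definition thd :: "3 \<Rightarrow> 3 \<Rightarrow> 3" where
  "thd a c = (if a \<noteq> 0 \<and> c \<noteq> 0 then 0 else if a \<noteq> 1 \<and> c \<noteq> 1 then 1 else 2)"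

lemma top_eq: "{0..<6::nat} = {0,1,2,3,4,5}" by auto

lemma eset_inj: "eset a b = eset c e \<longleftrightarrow> a = c \<and> b = e"
proof
  assume h: "eset a b = eset c e"
  have m1: "toN a \<in> {toN c, toN e + 3}" using h unfolding eset_def by blast
  have "toN a \<noteq> toN e + 3" using toN_lt[of a] by linarith
  with m1 have "toN a = toN c" by blast
  moreover have m2: "toN b + 3 \<in> {toN c, toN e + 3}" using h unfolding eset_def by blast
  have "toN b + 3 \<noteq> toN c" using toN_lt[of c] by linarith
  with m2 have "toN b = toN e" by simp
  ultimately show "a = c \<and> b = e" by simp
qed simp

lemma finite_eset [simp]: "finite (eset a b)" by (simp add: eset_def)
lemma finite_nset [simp]: "finite (nset a b)" by (simp add: nset_def)

lemma setbideg11: assumes "setbideg 1 1 S" shows "\<exists>a b. S = eset a b"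
proof -
  from assms have S: "S \<subseteq> {0..<6}" and c1: "card (S \<inter> {0..<3}) = 1" and c2: "card (S \<inter> {3..<6}) = 1"
    unfolding setbideg_def by auto
  have "\<exists>x. S \<inter> {0..<3} = {x}" using c1 by (simp add: card_1_singleton_iff)
  then obtain x where x: "S \<inter> {0..<3} = {x}" by blast
  have "\<exists>y. S \<inter> {3..<6} = {y}" using c2 by (simp add: card_1_singleton_iff)
  then obtain y where y: "S \<inter> {3..<6} = {y}" by blast
  have "x < 3" using x by auto
  then obtain a where a: "toN a = x" using toN_surj by blast
  have "3 \<le> y" "y < 6" using y by auto
  then have "y - 3 < 3" by simp
  then obtain b where b: "toN b = y - 3" using toN_surj by blast
  have "S = (S \<inter> {0..<3}) \<union> (S \<inter> {3..<6})" using S by auto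
  also have "\<dots> = eset a b" unfolding x y eset_def using a b \<open>3 \<le> y\<close> by auto
  finally show ?thesis by blast
qed

lemma setbideg10: assumes "setbideg 1 0 S" shows "\<exists>a. S = {toN a}"
proof -
  from assms have S: "S \<subseteq> {0..<6}" and c1: "card (S \<inter> {0..<3}) = 1" and c2: "card (S \<inter> {3..<6}) = 0"
    unfolding setbideg_def by auto
  have "\<exists>x. S \<inter> {0..<3} = {x}" using c1 by (simp add: card_1_singleton_iff)
  then obtain x where x: "S \<inter> {0..<3} = {x}" by blast
  have "S \<inter> {3..<6} = {}" using c2 card_0_eq[of "S \<inter> {3..<6}"] by simp
  have xm: "x \<in> S \<inter> {0..<3}" using x by blast
  have "S = {x}"
  proof
    show "{x} \<subseteq> S" using xm by blast
    show "S \<subseteq> {x}"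
    proof
      fix z assume z: "z \<in> S"
      show "z \<in> {x}"
      proof (cases "z < 3")
        case True then have "z \<in> S \<inter> {0..<3}" using z by simp
        then show ?thesis using x by simp
      next
        case False then have "z \<in> S \<inter> {3..<6}" using z S by auto
        then show ?thesis using \<open>S \<inter> {3..<6} = {}\<close> by simp
      qed
    qed
  qed
  moreover have "x < 3" using xm by simp
  then obtain a where "toN a = x" using toN_surj by blast
  ultimately have "S = {toN a}" by simp
  then show ?thesis by blast
qed

lemma setbideg22: assumes "setbideg 2 2 S" shows "\<exists>a b. S = nset a b"
proof -
  from assms have S: "S \<subseteq> {0..<6}" and c1: "card (S \<inter> {0..<3}) = 2" and c2: "card (S \<inter> {3..<6}) = 2"
    unfolding setbideg_def by auto
  have "card ({0..<3} - (S \<inter> {0..<3})) = 1"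
    using c1 by (subst card_Diff_subset) auto
  then have "\<exists>x. {0..<3} - (S \<inter> {0..<3}) = {x}" by (simp add: card_1_singleton_iff)
  then obtain x where x: "{0..<3} - (S \<inter> {0..<3}) = {x}" by blast
  have "card ({3..<6} - (S \<inter> {3..<6})) = 1"
    using c2 by (subst card_Diff_subset) auto
  then have "\<exists>y. {3..<6} - (S \<inter> {3..<6}) = {y}" by (simp add: card_1_singleton_iff)
  then obtain y where y: "{3..<6} - (S \<inter> {3..<6}) = {y}" by blast
  have xm: "x \<in> {0..<3} - (S \<inter> {0..<3})" using x by blast
  have ym: "y \<in> {3..<6} - (S \<inter> {3..<6})" using y by blast
  have x3: "x < 3" and xS: "x \<notin> S" using xm by auto
  have y3: "3 \<le> y" "y < 6" and yS: "y \<notin> S" using ym by auto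
  have xu: "z = x" if "z < 3" "z \<notin> S" for z
  proof -
    have "z \<in> {0..<3} - (S \<inter> {0..<3})" using that by simp
    then show ?thesis using x by simp
  qed
  have yu: "z = y" if "3 \<le> z" "z < 6" "z \<notin> S" for z
  proof -
    have "z \<in> {3..<6} - (S \<inter> {3..<6})" using that by simp
    then show ?thesis using y by simp
  qed
  obtain a where a: "toN a = x" using toN_surj x3 by blast
  have "y - 3 < 3" using y3 by simp
  then obtain b where b: "toN b = y - 3" using toN_surj by blast
  have "S = {0..<6} - {x, y}"
  proof
    show "S \<subseteq> {0..<6} - {x, y}" using S xS yS by blast
    show "{0..<6} - {x, y} \<subseteq> S"
    proof
      fix z assume z: "z \<in> {0..<6} - {x, y}"
      show "z \<in> S"
      proof (rule ccontr)
        assume zS: "z \<notin> S"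
        show False
        proof (cases "z < 3")
          case True then show False using xu[OF True zS] z by simp
        next
          case False then show False using yu[of z] zS z by simp
        qed
      qed
    qed
  qed
  moreover have "{x, y} = eset a b" unfolding eset_def using a b y3 by auto
  ultimately have "S = nset a b" unfolding nset_def by simp
  then show ?thesis by blast
qed

lemma setbideg33: assumes "setbideg 3 3 S" shows "S = {0..<6}"
proof -
  from assms have S: "S \<subseteq> {0..<6}" and c1: "card (S \<inter> {0..<3}) = 3" and c2: "card (S \<inter> {3..<6}) = 3"
    unfolding setbideg_def by auto
  have a1: "S \<inter> {0..<3} = {0..<3}" using c1 by (intro card_subset_eq) auto
  have a2: "S \<inter> {3..<6} = {3..<6}" using c2 by (intro card_subset_eq) auto
  have "{0..<6} \<subseteq> S"
  proof
    fix z :: nat assume z: "z \<in> {0..<6}"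
    show "z \<in> S"
    proof (cases "z < 3")
      case True then have "z \<in> S \<inter> {0..<3}" using a1 by simp
      then show ?thesis by simp
    next
      case False then have "z \<in> S \<inter> {3..<6}" using a2 z by simp
      then show ?thesis by simp
    qed
  qed
  then show ?thesis using S by blast
qed

lemma nset_sub: "eset c e \<subseteq> nset a b \<longleftrightarrow> c \<noteq> a \<and> e \<noteq> b"
  unfolding nset_def eset_def using toN_lt[of c] toN_lt[of e] toN_lt[of a] toN_lt[of b]
  by (auto simp del: toN_lt)

lemma nset_diff_all: "\<forall>a b c e. c \<noteq> a \<longrightarrow> e \<noteq> b \<longrightarrow> nset a b - eset c e = eset (thd a c) (thd b e)"
  unfolding forall_3 nset_def eset_def thd_def top_eq
  by (simp add: set_eq_subset insert_Diff_if)

lemma nset_diff: "c \<noteq> a \<Longrightarrow> e \<noteq> b \<Longrightarrow> nset a b - eset c e = eset (thd a c) (thd b e)"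
  using nset_diff_all by blast

lemma wedge11:
  assumes "has_bidegree 1 1 \<alpha>" "finite S"
  shows "wedge \<alpha> \<beta> S = (\<Sum>c\<in>UNIV. \<Sum>e\<in>UNIV. if eset c e \<subseteq> S then
      shuffle_sign (eset c e) (S - eset c e) * \<alpha> (eset c e) * \<beta> (S - eset c e) else 0)"
proof -
  let ?g = "\<lambda>A. if A \<subseteq> S then shuffle_sign A (S - A) * \<alpha> A * \<beta> (S - A) else 0"
  have supp: "A \<in> (\<lambda>p. eset (fst p) (snd p)) ` UNIV" if "\<alpha> A \<noteq> 0" for A
  proof -
    have "setbideg 1 1 A" using assms(1) that unfolding has_bidegree_iff by blast
    then obtain c e where "A = eset c e" using setbideg11 by blast
    then show ?thesis by (intro image_eqI[of _ _ "(c,e)"]) auto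
  qed
  have "wedge \<alpha> \<beta> S = sum ?g ((\<lambda>p. eset (fst p) (snd p)) ` UNIV)"
    by (rule wedge_supp) (use supp assms(2) in auto)
  also have "\<dots> = (\<Sum>p\<in>UNIV. ?g (eset (fst p) (snd p)))"
    by (subst sum.reindex) (auto simp: inj_on_def eset_inj prod_eq_iff)
  also have "\<dots> = (\<Sum>c\<in>UNIV. \<Sum>e\<in>UNIV. ?g (eset c e))"
    by (simp add: UNIV_Times_UNIV[symmetric] sum.cartesian_product case_prod_beta del: UNIV_Times_UNIV)
  finally show ?thesis .
qed

lemma wedge10:
  fixes f :: "3 \<Rightarrow> nat"
  assumes "\<And>A. \<alpha> A \<noteq> 0 \<Longrightarrow> \<exists>c. A = {f c}" "inj f" "finite S"
  shows "wedge \<alpha> \<beta> S = (\<Sum>c\<in>UNIV. if {f c} \<subseteq> S then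
      shuffle_sign {f c} (S - {f c}) * \<alpha> {f c} * \<beta> (S - {f c}) else 0)"
proof -
  let ?g = "\<lambda>A. if A \<subseteq> S then shuffle_sign A (S - A) * \<alpha> A * \<beta> (S - A) else 0"
  have "wedge \<alpha> \<beta> S = sum ?g ((\<lambda>c. {f c}) ` UNIV)"
    by (rule wedge_supp) (use assms in auto)
  also have "\<dots> = (\<Sum>c\<in>UNIV. ?g {f c})"
    by (subst sum.reindex) (use assms(2) in \<open>auto simp: inj_on_def inj_def\<close>)
  finally show ?thesis .
qed

lemma wedge_nset:
  assumes "has_bidegree 1 1 \<alpha>"
  shows "wedge \<alpha> \<beta> (nset a b) = (\<Sum>c\<in>UNIV. \<Sum>e\<in>UNIV. if c \<noteq> a \<and> e \<noteq> b then
      shuffle_sign (eset c e) (eset (thd a c) (thd b e)) * \<alpha> (eset c e) * \<beta> (eset (thd a c) (thd b e)) else 0)"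
  unfolding wedge11[OF assms finite_nset]
  by (intro sum.cong refl) (simp add: nset_sub nset_diff)

lemma eset_sub_top: "eset c e \<subseteq> {0..<6}"
  unfolding eset_def using toN_lt[of c] toN_lt[of e] by (auto simp del: toN_lt)

lemma wedge_top:
  assumes "has_bidegree 1 1 \<alpha>"
  shows "wedge \<alpha> \<beta> {0..<6} = (\<Sum>c\<in>UNIV. \<Sum>e\<in>UNIV.
      shuffle_sign (eset c e) (nset c e) * \<alpha> (eset c e) * \<beta> (nset c e))"
  unfolding wedge11[OF assms finite_atLeastLessThan]
  by (intro sum.cong refl) (simp add: eset_sub_top nset_def)

lemma sh_ee: "shuffle_sign (eset c e) (eset c' e') =
   (-1) ^ ((if toN c' < toN c then 1 else 0) + 1 + (if toN e' < toN e then 1 else 0))"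
proof -
  have d1: "toN c \<noteq> toN e + 3" "toN c' \<noteq> toN e' + 3" "\<not> toN e' + 3 < toN c" "toN c' < toN e + 3"
    using toN_lt[of c] toN_lt[of c'] by linarith+
  show ?thesis using d1 by (simp add: shuffle_sign_eval eset_def del: toN_inj)
qed

lemma sh_en: "shuffle_sign (eset a b) (nset a b) = (-1) ^ (toN a + toN b)"
proof -
  have "a = 1 \<or> a = 2 \<or> a = 3" "b = 1 \<or> b = 2 \<or> b = 3" by (rule exhaust_3)+
  then show ?thesis
    by (elim disjE) (simp_all add: nset_def eset_def top_eq insert_Diff_if shuffle_sign_eval)
qed

lemma csig_csig: "x < 6 \<Longrightarrow> csig (csig x) = x" by (auto simp: csig_def)

lemma pairs_same_empty: "{(p, q). p = (x::nat) \<and> q = x \<and> p < q \<and> R p q} = {}" by auto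

lemma conjf_single: "conjf \<alpha> {toN e + 3} = cnj (\<alpha> {toN e})"
proof -
  have s: "{toN e + 3} \<subseteq> {0..<6}" using toN_lt[of e] by simp
  have i: "csig ` {toN e + 3} = {toN e}" by (simp add: csig_def)
  show ?thesis unfolding conjf_def using s i by (simp add: Let_def pairs_same_empty)
qed

lemma conjf_supp1:
  assumes "has_bidegree 1 0 \<xi>" "conjf \<xi> T \<noteq> 0"
  shows "\<exists>e. T = {toN e + 3}"
proof -
  have T: "T \<subseteq> {0..<6}"
  proof (rule ccontr)
    assume "\<not> T \<subseteq> {0..<6}"
    then have "conjf \<xi> T = 0" unfolding conjf_def by simp
    then show False using assms(2) by simp
  qed
  have "\<xi> (csig ` T) \<noteq> 0"
  proof
    assume "\<xi> (csig ` T) = 0"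
    then have "conjf \<xi> T = 0" unfolding conjf_def Let_def using T by simp
    then show False using assms(2) by simp
  qed
  then have "setbideg 1 0 (csig ` T)" using assms(1) unfolding has_bidegree_iff by blast
  then obtain a where a: "csig ` T = {toN a}" using setbideg10 by blast
  have cc: "csig (csig x) = x" if x: "x \<in> T" for x
  proof -
    have "x < 6" using T x by auto
    then show ?thesis by (rule csig_csig)
  qed
  have "csig ` (csig ` T) = T"
  proof
    show "csig ` csig ` T \<subseteq> T"
    proof
      fix y assume "y \<in> csig ` csig ` T"
      then obtain x where "x \<in> T" "y = csig (csig x)" by blast
      then show "y \<in> T" using cc by simp
    qed
    show "T \<subseteq> csig ` csig ` T"
    proof
      fix x assume x: "x \<in> T"
      have "csig (csig x) \<in> csig ` csig ` T" using x by blast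
      then show "x \<in> csig ` csig ` T" using cc[OF x] by simp
    qed
  qed
  then have "T = csig ` {toN a}" using a by simp
  also have "\<dots> = {toN a + 3}" using toN_lt[of a] by (simp add: csig_def)
  finally show ?thesis by blast
qed

lemma setbideg_up: "setbideg 0 1 {toN e + 3}"
proof -
  have "{toN e + 3} \<inter> {0..<3} = {}" "{toN e + 3} \<inter> {3..<6} = {toN e + 3}" using toN_lt[of e] by (auto simp del: toN_lt)
  then show ?thesis unfolding setbideg_def using toN_lt[of e] by simp
qed

lemma setbideg_eset: "setbideg 1 1 (eset a b)"
proof -
  have "eset a b \<inter> {0..<3} = {toN a}" "eset a b \<inter> {3..<6} = {toN b + 3}"
    unfolding eset_def using toN_lt[of a] toN_lt[of b] by (auto simp del: toN_lt)
  then show ?thesis unfolding setbideg_def using eset_sub_top by simp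
qed

lemma bideg01_conj: "has_bidegree 1 0 \<xi> \<Longrightarrow> has_bidegree 0 1 (conjf \<xi>)"
proof -
  assume h: "has_bidegree 1 0 \<xi>"
  show ?thesis unfolding has_bidegree_iff[of 0 1]
  proof (intro allI impI)
    fix S assume "conjf \<xi> S \<noteq> 0"
    then obtain e where "S = {toN e + 3}" using conjf_supp1[OF h] by blast
    then show "setbideg 0 1 S" using setbideg_up by simp
  qed
qed

lemma Lam_bideg: "has_bidegree 1 0 \<xi> \<Longrightarrow> has_bidegree 1 1 (wedge \<xi> (conjf \<xi>))"
  using wedge_bideg[of 1 0 \<xi> 0 1 "conjf \<xi>"] bideg01_conj by simp

lemma bideg10_supp: "has_bidegree 1 0 \<xi> \<Longrightarrow> \<xi> A \<noteq> 0 \<Longrightarrow> \<exists>c. A = {toN c}"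
  unfolding has_bidegree_iff using setbideg10 by blast

lemma inj_toN: "inj toN" by (simp add: inj_def)

lemma Lam_val:
  assumes "has_bidegree 1 0 \<xi>"
  shows "wedge \<xi> (conjf \<xi>) (eset c e) = \<xi> {toN c} * cnj (\<xi> {toN e})"
proof -
  have "wedge \<xi> (conjf \<xi>) (eset c e) = (\<Sum>a\<in>UNIV. if {toN a} \<subseteq> eset c e then
      shuffle_sign {toN a} (eset c e - {toN a}) * \<xi> {toN a} * conjf \<xi> (eset c e - {toN a}) else 0)"
    by (rule wedge10) (use bideg10_supp[OF assms] inj_toN in auto)
  also have "\<dots> = (\<Sum>a\<in>UNIV. if a = c then \<xi> {toN c} * cnj (\<xi> {toN e}) else 0)"
  proof (intro sum.cong refl)
    fix a
    have ne: "toN a \<noteq> toN e + 3" using toN_lt[of a] by linarith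
    show "(if {toN a} \<subseteq> eset c e then shuffle_sign {toN a} (eset c e - {toN a}) * \<xi> {toN a} * conjf \<xi> (eset c e - {toN a}) else 0)
        = (if a = c then \<xi> {toN c} * cnj (\<xi> {toN e}) else 0)"
    proof (cases "a = c")
      case True
      have d: "eset c e - {toN c} = {toN e + 3}" unfolding eset_def using ne True by auto
      have nl: "\<not> toN e + 3 < toN c" using toN_lt[of c] by linarith
      have s: "shuffle_sign {toN c} {toN e + 3} = 1"
        using nl by (simp add: shuffle_sign_eval)
      show ?thesis using True d s by (simp add: eset_def conjf_single)
    next
      case False
      then have "\<not> {toN a} \<subseteq> eset c e" unfolding eset_def using ne by auto
      then show ?thesis using False by simp
    qed
  qed
  also have "\<dots> = \<xi> {toN c} * cnj (\<xi> {toN e})" by simp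
  finally show ?thesis .
qed

lemma sum3: "(\<Sum>j<3. f j) = (\<Sum>a\<in>(UNIV::3 set). f (toN a))"
  by (simp add: numeral_3_eq_3 numeral_2_eq_2 sum_3 ac_simps)

lemma idx_toN [simp]: "idx (toN a) = a"
proof -
  have "a = 1 \<or> a = 2 \<or> a = 3" by (rule exhaust_3)
  then show ?thesis by (auto simp: idx_def)
qed

definition mk11 :: "(3 \<Rightarrow> 3 \<Rightarrow> complex) \<Rightarrow> cform" where
  "mk11 f S = (\<Sum>a\<in>UNIV. \<Sum>b\<in>UNIV. if S = eset a b then f a b else 0)"

lemma mk11_val [simp]: "mk11 f (eset c e) = f c e"
proof -
  have "mk11 f (eset c e) = (\<Sum>a\<in>UNIV. \<Sum>b\<in>UNIV. if c = a then (if e = b then f a b else 0) else 0)"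
    unfolding mk11_def eset_inj by (intro sum.cong refl) auto
  also have "\<dots> = (\<Sum>a\<in>UNIV. if c = a then f a e else 0)"
    by (intro sum.cong refl) auto
  also have "\<dots> = f c e" by simp
  finally show ?thesis .
qed

lemma mk11_zero: "(\<And>a b. S \<noteq> eset a b) \<Longrightarrow> mk11 f S = 0"
  unfolding mk11_def by simp

lemma mk11_bideg: "has_bidegree 1 1 (mk11 f)"
  unfolding has_bidegree_iff
proof (intro allI impI)
  fix S assume "mk11 f S \<noteq> 0"
  then obtain a b where "S = eset a b" using mk11_zero by blast
  then show "setbideg 1 1 S" using setbideg_eset by simp
qed

lemma omega_mk: "omega W = mk11 (\<lambda>a b. \<i> * W $ b $ a)"
  unfolding omega_def mk11_def sum3 by (simp add: eset_def cong: if_cong)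

definition GI :: "complex^3^3 \<Rightarrow> complex^3^3" where "GI W = matrix_inv W"

lemma inner11_alt: "inner11 W \<phi> \<psi> = (\<Sum>a\<in>UNIV. \<Sum>b\<in>UNIV. \<Sum>c\<in>UNIV. \<Sum>e\<in>UNIV.
   GI W $ a $ c * GI W $ e $ b * \<phi> (eset a b) * cnj (\<psi> (eset c e)))"
  unfolding inner11_def ginv_def coef11_def sum3 GI_def by (simp add: eset_def cong: if_cong)

lemma covec_alt: "covec_norm2 W \<xi> = Re (\<Sum>a\<in>UNIV. \<Sum>b\<in>UNIV. GI W $ a $ b * \<xi> {toN a} * cnj (\<xi> {toN b}))"
  unfolding covec_norm2_def ginv_def sum3 GI_def by simp

lemma three_eq_zero [simp]: "(3::3) = 0" by simp

lemma omega3_top: "omega3 W {0..<6} = 6 * \<i> * det W"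
proof -
  have "omega3 W {0..<6} = (\<Sum>c\<in>UNIV. \<Sum>e\<in>UNIV. (-1) ^ (toN c + toN e) * (\<i> * W $ e $ c) *
     (\<Sum>c'\<in>UNIV. \<Sum>e'\<in>UNIV. if c' \<noteq> c \<and> e' \<noteq> e then
      (-1) ^ ((if toN (thd c c') < toN c' then 1 else 0) + 1 + (if toN (thd e e') < toN e' then 1 else 0))
       * (\<i> * W $ e' $ c') * (\<i> * W $ (thd e e') $ (thd c c')) else 0))"
    unfolding omega3_def omega_mk wedge_top[OF mk11_bideg] wedge_nset[OF mk11_bideg] mk11_val sh_en sh_ee ..
  also have "\<dots> = 6 * \<i> * det W"
    apply (simp add: sum_3 thd_def det_3)
    by (simp add: algebra_simps)
  finally show ?thesis .
qed

lemma herm_entry: "hermitian_metric W \<Longrightarrow> cnj (W $ a $ b) = W $ b $ a"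
proof -
  assume "hermitian_metric W"
  then have "W $ a $ b = cnj (W $ b $ a)" unfolding hermitian_metric_def by blast
  then show ?thesis by simp
qed

lemma herm_det_nz: assumes "hermitian_metric W" shows "det W \<noteq> 0"
proof
  assume "det W = 0"
  then have "\<not> invertible W" by (simp add: invertible_det_nz)
  then have "\<not> (\<exists>B. B ** W = mat 1)" using invertible_left_inverse by blast
  then obtain v where v: "W *v v = 0" "v \<noteq> 0" using matrix_left_invertible_ker by blast
  have "(\<Sum>a\<in>UNIV. \<Sum>b\<in>UNIV. W$a$b * v$b * cnj (v$a)) = (\<Sum>a\<in>UNIV. cnj (v$a) * (W *v v)$a)"
    by (simp add: matrix_vector_mult_def sum_distrib_left mult_ac)
  also have "\<dots> = 0" using v by simp
  finally have "Re (\<Sum>a\<in>UNIV. \<Sum>b\<in>UNIV. W$a$b * v$b * cnj (v$a)) = 0" by simp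
  moreover have "0 < Re (\<Sum>a\<in>UNIV. \<Sum>b\<in>UNIV. W$a$b * v$b * cnj (v$a))"
    using assms v(2) unfolding hermitian_metric_def by blast
  ultimately show False by simp
qed

lemma herm_det_real: assumes "hermitian_metric W" shows "cnj (det W) = det W"
  by (simp add: det_3 herm_entry[OF assms] algebra_simps)

lemma GI_inv: assumes "hermitian_metric W" shows "W ** GI W = mat 1" "GI W ** W = mat 1"
proof -
  have "invertible W" using herm_det_nz[OF assms] by (simp add: invertible_det_nz)
  then have "\<exists>A'. W ** A' = mat 1 \<and> A' ** W = mat 1" unfolding invertible_def by blast
  then have "W ** GI W = mat 1 \<and> GI W ** W = mat 1" unfolding GI_def matrix_inv_def by (rule someI_ex)
  then show "W ** GI W = mat 1" "GI W ** W = mat 1" by auto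
qed

lemma t3: "(1 + 1 :: 3) = 2" "(2 + 1 :: 3) = 0" "(1 + 2 :: 3) = 0" "(2 + 2 :: 3) = 1" "(0 + 1 :: 3) = 1" "(0 + 2 :: 3) = 2" by simp_all

lemma four_eq_one [simp]: "(4::3) = 1" by simp

definition adjM :: "complex^3^3 \<Rightarrow> complex^3^3" where
  "adjM W = (\<chi> i j. W$(j+1)$(i+1) * W$(j+2)$(i+2) - W$(j+1)$(i+2) * W$(j+2)$(i+1))"

lemma adj_mul: "adjM W ** W = (\<chi> i j. if i = j then det W else 0)"
  unfolding vec_eq_iff forall_3 adjM_def matrix_matrix_mult_def
  apply (simp add: sum_3 det_3)
  apply (simp_all add: algebra_simps)
  done

lemma adj_G: assumes "hermitian_metric W" shows "det W * GI W $ i $ j = adjM W $ i $ j"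
proof -
  have "adjM W = adjM W ** (W ** GI W)" using GI_inv[OF assms] by simp
  also have "\<dots> = (adjM W ** W) ** GI W" by (simp add: matrix_mul_assoc)
  finally have "adjM W $ i $ j = ((\<chi> i j. if i = j then det W else 0) ** GI W) $ i $ j"
    by (simp add: adj_mul)
  also have "\<dots> = det W * GI W $ i $ j"
    by (simp add: matrix_matrix_mult_def if_distrib if_distribR cong: if_cong)
  finally show ?thesis by simp
qed

lemma adj_herm: assumes "hermitian_metric W" shows "cnj (adjM W $ i $ j) = adjM W $ j $ i"
  unfolding adjM_def by (simp add: herm_entry[OF assms] algebra_simps)

lemma G_herm: assumes "hermitian_metric W" shows "cnj (GI W $ i $ j) = GI W $ j $ i"
proof -
  have d: "det W \<noteq> 0" using herm_det_nz[OF assms] .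
  have "GI W $ i $ j = adjM W $ i $ j / det W" using adj_G[OF assms, of i j] d by (simp add: field_simps)
  moreover have "GI W $ j $ i = adjM W $ j $ i / det W" using adj_G[OF assms, of j i] d by (simp add: field_simps)
  ultimately show ?thesis using adj_herm[OF assms] herm_det_real[OF assms] by simp
qed

lemma csig_nset: "csig ` nset b a = nset a b \<and>
   (-1::complex) ^ card {(p, q). p \<in> nset a b \<and> q \<in> nset a b \<and> p < q \<and> csig q < csig p} = 1"
proof -
  have "a = 1 \<or> a = 2 \<or> a = 3" "b = 1 \<or> b = 2 \<or> b = 3" by (rule exhaust_3)+
  then show ?thesis unfolding card_pairs[OF finite_nset finite_nset]
    by (elim disjE) (simp_all add: nset_def eset_def top_eq insert_Diff_if csig_def set_eq_subset)
qed

lemma conjf_nset: "conjf \<alpha> (nset b a) = cnj (\<alpha> (nset a b))"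
proof -
  have sub: "nset b a \<subseteq> {0..<6}" by (simp add: nset_def)
  have "conjf \<alpha> (nset b a) = (-1) ^ card {(p, q). p \<in> nset a b \<and> q \<in> nset a b \<and> p < q \<and> csig q < csig p} * cnj (\<alpha> (nset a b))"
    unfolding conjf_def Let_def if_P[OF sub] csig_nset[THEN conjunct1] ..
  then show ?thesis using csig_nset[THEN conjunct2, of a b] by simp
qed

definition pp :: "cform \<Rightarrow> 3 \<Rightarrow> 3 \<Rightarrow> complex" where "pp \<Psi> a b = \<Psi> (nset a b)"
definition Lm :: "cform \<Rightarrow> complex^3^3" where "Lm \<Psi> = (\<chi> a b. (-1) ^ (toN a + toN b) * pp \<Psi> a b)"
definition Xm :: "complex^3^3 \<Rightarrow> cform \<Rightarrow> complex^3^3" where "Xm W \<Psi> = W ** Lm \<Psi> ** W"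
definition ch0 :: "complex^3^3 \<Rightarrow> cform \<Rightarrow> cform" where
  "ch0 W \<Psi> = mk11 (\<lambda>a b. (\<i> / det W) * Xm W \<Psi> $ b $ a)"

lemma pp_herm: "real_form \<Psi> \<Longrightarrow> cnj (pp \<Psi> a b) = pp \<Psi> b a"
  unfolding real_form_def pp_def by (metis conjf_nset)

lemma Lm_herm: "real_form \<Psi> \<Longrightarrow> cnj (Lm \<Psi> $ a $ b) = Lm \<Psi> $ b $ a"
  unfolding Lm_def by (simp add: pp_herm add.commute)

lemma Xm_herm: assumes "hermitian_metric W" "real_form \<Psi>"
  shows "cnj (Xm W \<Psi> $ i $ j) = Xm W \<Psi> $ j $ i"
  unfolding Xm_def matrix_matrix_mult_def
  by (simp add: sum_3 herm_entry[OF assms(1)] Lm_herm[OF assms(2)] algebra_simps)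

lemma wedge_top_Psi: assumes "has_bidegree 1 1 \<phi>"
  shows "wedge \<phi> \<Psi> {0..<6} = (\<Sum>c\<in>UNIV. \<Sum>e\<in>UNIV. \<phi> (eset c e) * Lm \<Psi> $ c $ e)"
  unfolding wedge_top[OF assms] sh_en Lm_def pp_def by (simp add: mult_ac)

lemma omega_bideg: "has_bidegree 1 1 (omega W)" unfolding omega_mk by (rule mk11_bideg)

lemma omega3_bideg: "has_bidegree 3 3 (omega3 W)"
proof -
  have "has_bidegree (1 + (1 + 1)) (1 + (1 + 1)) (wedge (omega W) (wedge (omega W) (omega W)))"
    by (intro wedge_bideg omega_bideg)
  then show ?thesis unfolding omega3_def by (simp add: numeral_3_eq_3)
qed

lemma bideg33_zero: "has_bidegree 3 3 \<alpha> \<Longrightarrow> S \<noteq> {0..<6} \<Longrightarrow> \<alpha> S = 0"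
  unfolding has_bidegree_iff using setbideg33 by blast

lemma entry3: "(A ** B ** C) $ a $ b = (\<Sum>c\<in>UNIV. \<Sum>e\<in>UNIV. A $ a $ c * B $ c $ e * C $ e $ b)"
proof -
  have "(A ** B ** C) $ a $ b = (\<Sum>e\<in>UNIV. \<Sum>c\<in>UNIV. A $ a $ c * B $ c $ e * C $ e $ b)"
    by (simp add: matrix_matrix_mult_def sum_distrib_right)
  also have "\<dots> = (\<Sum>c\<in>UNIV. \<Sum>e\<in>UNIV. A $ a $ c * B $ c $ e * C $ e $ b)"
    by (rule sum.swap)
  finally show ?thesis .
qed

lemma GXG: assumes "hermitian_metric W" shows "GI W ** Xm W \<Psi> ** GI W = Lm \<Psi>"
proof -
  have "GI W ** Xm W \<Psi> ** GI W = (GI W ** W) ** Lm \<Psi> ** (W ** GI W)"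
    unfolding Xm_def by (simp add: matrix_mul_assoc)
  then show ?thesis using GI_inv[OF assms] by simp
qed

lemma inner_ch0: assumes "hermitian_metric W" "real_form \<Psi>"
  shows "inner11 W \<phi> (ch0 W \<Psi>) = (- \<i> / det W) * (\<Sum>a\<in>UNIV. \<Sum>b\<in>UNIV. \<phi> (eset a b) * Lm \<Psi> $ a $ b)"
proof -
  let ?G = "GI W" and ?X = "Xm W \<Psi>" and ?d = "det W"
  have c: "cnj (\<i> / ?d * ?X $ e $ c) = (- \<i> / ?d) * ?X $ c $ e" for c e
    using herm_det_real[OF assms(1)] Xm_herm[OF assms] by simp
  have "inner11 W \<phi> (ch0 W \<Psi>) = (\<Sum>a\<in>UNIV. \<Sum>b\<in>UNIV. \<Sum>c\<in>UNIV. \<Sum>e\<in>UNIV.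
      ?G $ a $ c * ?G $ e $ b * \<phi> (eset a b) * ((- \<i> / ?d) * ?X $ c $ e))"
    unfolding inner11_alt ch0_def mk11_val c ..
  also have "\<dots> = (- \<i> / ?d) * (\<Sum>a\<in>UNIV. \<Sum>b\<in>UNIV. \<phi> (eset a b) * (?G ** ?X ** ?G) $ a $ b)"
    unfolding entry3
    by (simp add: sum_distrib_left mult_ac)
  finally show ?thesis using GXG[OF assms(1)] by simp
qed

lemma sum_delta2: fixes a b :: 3 shows "(\<Sum>c\<in>UNIV. \<Sum>e\<in>UNIV. (if c = a \<and> e = b then 1 else 0) * (f c e :: complex)) = f a b"
proof -
  have inner: "(\<Sum>e\<in>UNIV. (if c = a \<and> e = b then 1 else 0) * f c e) = (if c = a then f a b else 0)" for c
  proof (cases "c = a")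
    case True
    have "(\<Sum>e\<in>UNIV. (if c = a \<and> e = b then 1 else 0) * f c e) = (\<Sum>e\<in>UNIV. if e = b then f a e else 0)"
      using True by (intro sum.cong refl) simp
    also have "\<dots> = f a b" by (subst sum.delta) auto
    finally show ?thesis using True by simp
  qed simp
  show ?thesis unfolding inner by simp
qed

lemma hodge_eq:
  assumes herm: "hermitian_metric W" and b22: "has_bidegree 2 2 \<Psi>" and rf: "real_form \<Psi>"
  shows "hodge W \<Psi> = ch0 W \<Psi>"
proof -
  have cf: "conjf \<Psi> = \<Psi>" using rf unfolding real_form_def .
  have d: "det W \<noteq> 0" using herm_det_nz[OF herm] .
  have P0: "\<forall>\<phi>. has_bidegree 1 1 \<phi> \<longrightarrow> wedge \<phi> (conjf \<Psi>) = smult (inner11 W \<phi> (ch0 W \<Psi>) / 6) (omega3 W)"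
  proof (intro allI impI)
    fix \<phi> :: cform assume h: "has_bidegree 1 1 \<phi>"
    show "wedge \<phi> (conjf \<Psi>) = smult (inner11 W \<phi> (ch0 W \<Psi>) / 6) (omega3 W)"
      unfolding cf smult_def
    proof (rule ext)
      fix S show "wedge \<phi> \<Psi> S = inner11 W \<phi> (ch0 W \<Psi>) / 6 * omega3 W S"
      proof (cases "S = {0..<6}")
        case True
        show ?thesis unfolding True wedge_top_Psi[OF h] inner_ch0[OF herm rf] omega3_top
          using d by (simp add: field_simps)
      next
        case False
        have "has_bidegree (1 + 2) (1 + 2) (wedge \<phi> \<Psi>)" by (rule wedge_bideg[OF h b22])
        then have "has_bidegree 3 3 (wedge \<phi> \<Psi>)" by (simp add: numeral_3_eq_3)
        then have "wedge \<phi> \<Psi> S = 0" using bideg33_zero False by blast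
        moreover have "omega3 W S = 0" using bideg33_zero[OF omega3_bideg False] .
        ultimately show ?thesis by simp
      qed
    qed
  qed
  show ?thesis unfolding hodge_def
  proof (rule the_equality)
    show "has_bidegree 1 1 (ch0 W \<Psi>) \<and> (\<forall>\<phi>. has_bidegree 1 1 \<phi> \<longrightarrow>
        wedge \<phi> (conjf \<Psi>) = smult (inner11 W \<phi> (ch0 W \<Psi>) / 6) (omega3 W))"
      using P0 mk11_bideg unfolding ch0_def by blast
  next
    fix ch assume "has_bidegree 1 1 ch \<and> (\<forall>\<phi>. has_bidegree 1 1 \<phi> \<longrightarrow>
        wedge \<phi> (conjf \<Psi>) = smult (inner11 W \<phi> ch / 6) (omega3 W))"
    then have hb: "has_bidegree 1 1 ch"
      and hp: "\<And>\<phi>. has_bidegree 1 1 \<phi> \<Longrightarrow> wedge \<phi> \<Psi> = smult (inner11 W \<phi> ch / 6) (omega3 W)"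
      using cf by auto
    define Y where "Y = (\<chi> c e. cnj (ch (eset c e)))"
    have key: "(GI W ** Y ** GI W) $ a $ b = Lm \<Psi> $ a $ b / (\<i> * det W)" for a b
    proof -
      define \<phi> where "\<phi> = mk11 (\<lambda>c e. if c = a \<and> e = b then 1 else 0)"
      have h\<phi>: "has_bidegree 1 1 \<phi>" unfolding \<phi>_def by (rule mk11_bideg)
      have e1: "wedge \<phi> \<Psi> {0..<6} = inner11 W \<phi> ch / 6 * omega3 W {0..<6}"
        using hp[OF h\<phi>] unfolding smult_def by (rule fun_cong)
      have e2: "wedge \<phi> \<Psi> {0..<6} = Lm \<Psi> $ a $ b"
        unfolding wedge_top_Psi[OF h\<phi>] unfolding \<phi>_def mk11_val by (rule sum_delta2)
      have e3: "inner11 W \<phi> ch = (GI W ** Y ** GI W) $ a $ b"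
      proof -
        have "inner11 W \<phi> ch = (\<Sum>c\<in>UNIV. \<Sum>e\<in>UNIV. (if c = a \<and> e = b then 1 else 0) *
            (\<Sum>c'\<in>UNIV. \<Sum>e'\<in>UNIV. GI W $ c $ c' * GI W $ e' $ e * Y $ c' $ e'))"
          unfolding inner11_alt \<phi>_def mk11_val Y_def
          by (simp add: sum_distrib_left mult_ac)
        also have "\<dots> = (\<Sum>c'\<in>UNIV. \<Sum>e'\<in>UNIV. GI W $ a $ c' * GI W $ e' $ b * Y $ c' $ e')"
          by (rule sum_delta2)
        also have "\<dots> = (GI W ** Y ** GI W) $ a $ b" unfolding entry3 by (simp add: mult_ac)
        finally show ?thesis .
      qed
      show ?thesis using e1 e2 e3 d unfolding omega3_top by (simp add: field_simps)
    qed
    have "Y = (W ** GI W) ** Y ** (GI W ** W)" using GI_inv[OF herm] by simp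
    also have "\<dots> = W ** (GI W ** Y ** GI W) ** W" by (simp add: matrix_mul_assoc)
    finally have Yeq: "Y = W ** (GI W ** Y ** GI W) ** W" .
    have Yce: "Y $ c $ e = Xm W \<Psi> $ c $ e / (\<i> * det W)" for c e
    proof -
      have GYG: "GI W ** Y ** GI W = (\<chi> a b. Lm \<Psi> $ a $ b / (\<i> * det W))"
        by (simp add: vec_eq_iff key)
      have "Y $ c $ e = (W ** (\<chi> a b. Lm \<Psi> $ a $ b / (\<i> * det W)) ** W) $ c $ e"
        using Yeq GYG by simp
      also have "\<dots> = (\<Sum>f\<in>UNIV. \<Sum>g\<in>UNIV. W $ c $ f * (Lm \<Psi> $ f $ g / (\<i> * det W)) * W $ g $ e)"
        unfolding entry3 by simp
      also have "\<dots> = Xm W \<Psi> $ c $ e / (\<i> * det W)"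
        unfolding Xm_def entry3 by (simp add: sum_divide_distrib)
      finally show ?thesis .
    qed
    show "ch = ch0 W \<Psi>"
    proof (rule ext)
      fix S show "ch S = ch0 W \<Psi> S"
      proof (cases "\<exists>c e. S = eset c e")
        case True
        then obtain c e where S: "S = eset c e" by blast
        have "cnj (ch (eset c e)) = Xm W \<Psi> $ c $ e / (\<i> * det W)" using Yce[of c e] unfolding Y_def by simp
        then have "ch (eset c e) = cnj (Xm W \<Psi> $ c $ e / (\<i> * det W))" by (metis complex_cnj_cnj)
        also have "\<dots> = Xm W \<Psi> $ e $ c / (- \<i> * det W)"
          using Xm_herm[OF herm rf] herm_det_real[OF herm] by simp
        also have "\<dots> = ch0 W \<Psi> (eset c e)" unfolding ch0_def mk11_val
          using d by (simp add: field_simps)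
        finally show ?thesis using S by simp
      next
        case False
        have "ch S = 0"
        proof (rule ccontr)
          assume "ch S \<noteq> 0"
          then have "setbideg 1 1 S" using hb unfolding has_bidegree_iff by blast
          then show False using False setbideg11 by blast
        qed
        moreover have "ch0 W \<Psi> S = 0" unfolding ch0_def using False by (intro mk11_zero) blast
        ultimately show ?thesis by simp
      qed
    qed
  qed
qed

definition xv :: "cform \<Rightarrow> 3 \<Rightarrow> complex" where "xv \<xi> c = \<xi> {toN c}"
definition yv :: "cform \<Rightarrow> 3 \<Rightarrow> complex" where "yv \<xi> c = cnj (\<xi> {toN c})"
definition trL :: "complex^3^3 \<Rightarrow> cform \<Rightarrow> complex" where
  "trL W \<Psi> = (\<Sum>a\<in>UNIV. \<Sum>f\<in>UNIV. Lm \<Psi> $ a $ f * W $ f $ a)"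
definition Kx :: "cform \<Rightarrow> cform \<Rightarrow> 3 \<Rightarrow> complex" where
  "Kx \<xi> \<Psi> b = (\<Sum>a\<in>UNIV. (-1) ^ toN a * xv \<xi> a * pp \<Psi> a b)"
definition Ky :: "cform \<Rightarrow> cform \<Rightarrow> 3 \<Rightarrow> complex" where
  "Ky \<xi> \<Psi> a = (\<Sum>e\<in>UNIV. (-1) ^ toN e * yv \<xi> e * pp \<Psi> a e)"
definition sgn4 :: "3 \<Rightarrow> 3 \<Rightarrow> 3 \<Rightarrow> 3 \<Rightarrow> complex" where
  "sgn4 a b c e = (-1) ^ ((if toN (thd a c) < toN c then 1 else 0) + 1 + (if toN (thd b e) < toN e then 1 else 0))"
definition core :: "complex^3^3 \<Rightarrow> cform \<Rightarrow> cform \<Rightarrow> 3 \<Rightarrow> 3 \<Rightarrow> complex" where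
  "core W \<xi> \<Psi> a b = (\<Sum>c\<in>UNIV. \<Sum>e\<in>UNIV. if c \<noteq> a \<and> e \<noteq> b then
      sgn4 a b c e * (xv \<xi> c * yv \<xi> e) * (trL W \<Psi> * W $ (thd b e) $ (thd a c) - Xm W \<Psi> $ (thd b e) $ (thd a c)) else 0)
    + (\<Sum>f\<in>UNIV. \<Sum>g\<in>UNIV. adjM W $ f $ g * xv \<xi> f * yv \<xi> g) * pp \<Psi> a b"

lemma core_00: "core W \<xi> \<Psi> 0 0 = (W $ 0 $ 1 * W $ 1 $ 2 * yv \<xi> 2 - W $ 0 $ 1 * W $ 2 $ 2 * yv \<xi> 1 - W $ 0 $ 2 * W $ 1 $ 1 * yv \<xi> 2 + W $ 0 $ 2 * W $ 2 $ 1 * yv \<xi> 1) * Kx \<xi> \<Psi> 0 + (W $ 1 $ 1 * W $ 2 $ 2 * yv \<xi> 1 - W $ 1 $ 2 * W $ 2 $ 1 * yv \<xi> 1) * Kx \<xi> \<Psi> 1 + (- W $ 1 $ 1 * W $ 2 $ 2 * yv \<xi> 2 + W $ 1 $ 2 * W $ 2 $ 1 * yv \<xi> 2) * Kx \<xi> \<Psi> 2 + (W $ 1 $ 0 * W $ 2 $ 1 * xv \<xi> 2 - W $ 1 $ 0 * W $ 2 $ 2 * xv \<xi> 1 - W $ 1 $ 1 * W $ 2 $ 0 * xv \<xi> 2 + W $ 1 $ 1 * W $ 2 $ 2 * xv \<xi> 0 + W $ 1 $ 2 * W $ 2 $ 0 * xv \<xi> 1 - W $ 1 $ 2 * W $ 2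 $ 1 * xv \<xi> 0) * Ky \<xi> \<Psi> 0"
  unfolding core_def sgn4_def Kx_def Ky_def trL_def Xm_def entry3 Lm_def adjM_def
  by (simp add: sum_3 thd_def t3 algebra_simps)

lemma core_01: "core W \<xi> \<Psi> 0 1 = (- W $ 0 $ 1 * W $ 2 $ 2 * yv \<xi> 0 + W $ 0 $ 2 * W $ 2 $ 1 * yv \<xi> 0) * Kx \<xi> \<Psi> 0 + (W $ 0 $ 1 * W $ 1 $ 2 * yv \<xi> 2 - W $ 0 $ 2 * W $ 1 $ 1 * yv \<xi> 2 + W $ 1 $ 1 * W $ 2 $ 2 * yv \<xi> 0 - W $ 1 $ 2 * W $ 2 $ 1 * yv \<xi> 0) * Kx \<xi> \<Psi> 1 + (- W $ 0 $ 1 * W $ 2 $ 2 * yv \<xi> 2 + W $ 0 $ 2 * W $ 2 $ 1 * yv \<xi> 2) * Kx \<xi> \<Psi> 2 + (W $ 0 $ 0 * W $ 2 $ 1 * xv \<xi> 2 - W $ 0 $ 0 * W $ 2 $ 2 * xv \<xi> 1 - W $ 0 $ 1 * W $ 2 $ 0 * xv \<xi> 2 + W $ 0 $ 1 * W $ 2 $ 2 * xv \<xi> 0 + W $ 0 $ 2 * W $ 2 $ 0 * xv \<xi> 1 - W $ 0 $ 2 * W $ 2 $ 1 * xv \<xi> 0) * Ky \<xi> \<Psi> 0"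
  unfolding core_def sgn4_def Kx_def Ky_def trL_def Xm_def entry3 Lm_def adjM_def
  by (simp add: sum_3 thd_def t3 algebra_simps)

lemma core_02: "core W \<xi> \<Psi> 0 2 = (- W $ 0 $ 1 * W $ 1 $ 2 * yv \<xi> 0 + W $ 0 $ 2 * W $ 1 $ 1 * yv \<xi> 0) * Kx \<xi> \<Psi> 0 + (W $ 0 $ 1 * W $ 1 $ 2 * yv \<xi> 1 - W $ 0 $ 2 * W $ 1 $ 1 * yv \<xi> 1) * Kx \<xi> \<Psi> 1 + (- W $ 0 $ 1 * W $ 2 $ 2 * yv \<xi> 1 + W $ 0 $ 2 * W $ 2 $ 1 * yv \<xi> 1 + W $ 1 $ 1 * W $ 2 $ 2 * yv \<xi> 0 - W $ 1 $ 2 * W $ 2 $ 1 * yv \<xi> 0) * Kx \<xi> \<Psi> 2 + (W $ 0 $ 0 * W $ 1 $ 1 * xv \<xi> 2 - W $ 0 $ 0 * W $ 1 $ 2 * xv \<xi> 1 - W $ 0 $ 1 * W $ 1 $ 0 * xv \<xi> 2 + W $ 0 $ 1 * W $ 1 $ 2 * xv \<xi> 0 + W $ 0 $ 2 * W $ 1 $ 0 * xv \<xi> 1 - W $ 0 $ 2 * W $ 1 $ 1 * xv \<xi> 0) * Ky \<xi> \<Psi> 0"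
  unfolding core_def sgn4_def Kx_def Ky_def trL_def Xm_def entry3 Lm_def adjM_def
  by (simp add: sum_3 thd_def t3 algebra_simps)

lemma core_10: "core W \<xi> \<Psi> 1 0 = (W $ 0 $ 0 * W $ 1 $ 2 * yv \<xi> 2 - W $ 0 $ 0 * W $ 2 $ 2 * yv \<xi> 1 - W $ 0 $ 2 * W $ 1 $ 0 * yv \<xi> 2 + W $ 0 $ 2 * W $ 2 $ 0 * yv \<xi> 1) * Kx \<xi> \<Psi> 0 + (W $ 1 $ 0 * W $ 2 $ 2 * yv \<xi> 1 - W $ 1 $ 2 * W $ 2 $ 0 * yv \<xi> 1) * Kx \<xi> \<Psi> 1 + (- W $ 1 $ 0 * W $ 2 $ 2 * yv \<xi> 2 + W $ 1 $ 2 * W $ 2 $ 0 * yv \<xi> 2) * Kx \<xi> \<Psi> 2 + (W $ 1 $ 0 * W $ 2 $ 1 * xv \<xi> 2 - W $ 1 $ 0 * W $ 2 $ 2 * xv \<xi> 1 - W $ 1 $ 1 * W $ 2 $ 0 * xv \<xi> 2 + W $ 1 $ 1 * W $ 2 $ 2 * xv \<xi> 0 + W $ 1 $ 2 * W $ 2 $ 0 * xv \<xi> 1 - W $ 1 $ 2 * W $ 2 $ 1 * xv \<xi> 0) * Ky \<xi> \<Psi> 1"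
  unfolding core_def sgn4_def Kx_def Ky_def trL_def Xm_def entry3 Lm_def adjM_def
  by (simp add: sum_3 thd_def t3 algebra_simps)

lemma core_11: "core W \<xi> \<Psi> 1 1 = (- W $ 0 $ 0 * W $ 2 $ 2 * yv \<xi> 0 + W $ 0 $ 2 * W $ 2 $ 0 * yv \<xi> 0) * Kx \<xi> \<Psi> 0 + (W $ 0 $ 0 * W $ 1 $ 2 * yv \<xi> 2 - W $ 0 $ 2 * W $ 1 $ 0 * yv \<xi> 2 + W $ 1 $ 0 * W $ 2 $ 2 * yv \<xi> 0 - W $ 1 $ 2 * W $ 2 $ 0 * yv \<xi> 0) * Kx \<xi> \<Psi> 1 + (- W $ 0 $ 0 * W $ 2 $ 2 * yv \<xi> 2 + W $ 0 $ 2 * W $ 2 $ 0 * yv \<xi> 2) * Kx \<xi> \<Psi> 2 + (W $ 0 $ 0 * W $ 2 $ 1 * xv \<xi> 2 - W $ 0 $ 0 * W $ 2 $ 2 * xv \<xi> 1 - W $ 0 $ 1 * W $ 2 $ 0 * xv \<xi> 2 + W $ 0 $ 1 * W $ 2 $ 2 * xv \<xi> 0 + W $ 0 $ 2 * W $ 2 $ 0 * xv \<xi> 1 - W $ 0 $ 2 * W $ 2 $ 1 * xv \<xi> 0) * Ky \<xi> \<Psi> 1"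
  unfolding core_def sgn4_def Kx_def Ky_def trL_def Xm_def entry3 Lm_def adjM_def
  by (simp add: sum_3 thd_def t3 algebra_simps)

lemma core_12: "core W \<xi> \<Psi> 1 2 = (- W $ 0 $ 0 * W $ 1 $ 2 * yv \<xi> 0 + W $ 0 $ 2 * W $ 1 $ 0 * yv \<xi> 0) * Kx \<xi> \<Psi> 0 + (W $ 0 $ 0 * W $ 1 $ 2 * yv \<xi> 1 - W $ 0 $ 2 * W $ 1 $ 0 * yv \<xi> 1) * Kx \<xi> \<Psi> 1 + (- W $ 0 $ 0 * W $ 2 $ 2 * yv \<xi> 1 + W $ 0 $ 2 * W $ 2 $ 0 * yv \<xi> 1 + W $ 1 $ 0 * W $ 2 $ 2 * yv \<xi> 0 - W $ 1 $ 2 * W $ 2 $ 0 * yv \<xi> 0) * Kx \<xi> \<Psi> 2 + (W $ 0 $ 0 * W $ 1 $ 1 * xv \<xi> 2 - W $ 0 $ 0 * W $ 1 $ 2 * xv \<xi> 1 - W $ 0 $ 1 * W $ 1 $ 0 * xv \<xi> 2 + W $ 0 $ 1 * W $ 1 $ 2 * xv \<xi> 0 + W $ 0 $ 2 * W $ 1 $ 0 * xv \<xi> 1 - W $ 0 $ 2 * W $ 1 $ 1 * xv \<xi> 0) * Ky \<xi> \<Psi> 1"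
  unfolding core_def sgn4_def Kx_def Ky_def trL_def Xm_def entry3 Lm_def adjM_def
  by (simp add: sum_3 thd_def t3 algebra_simps)

lemma core_20: "core W \<xi> \<Psi> 2 0 = (W $ 0 $ 0 * W $ 1 $ 1 * yv \<xi> 2 - W $ 0 $ 0 * W $ 2 $ 1 * yv \<xi> 1 - W $ 0 $ 1 * W $ 1 $ 0 * yv \<xi> 2 + W $ 0 $ 1 * W $ 2 $ 0 * yv \<xi> 1 + W $ 1 $ 0 * W $ 2 $ 1 * yv \<xi> 0 - W $ 1 $ 1 * W $ 2 $ 0 * yv \<xi> 0) * Kx \<xi> \<Psi> 0 + (- W $ 1 $ 0 * W $ 2 $ 1 * xv \<xi> 0 + W $ 1 $ 1 * W $ 2 $ 0 * xv \<xi> 0) * Ky \<xi> \<Psi> 0 + (W $ 1 $ 0 * W $ 2 $ 1 * xv \<xi> 1 - W $ 1 $ 1 * W $ 2 $ 0 * xv \<xi> 1) * Ky \<xi> \<Psi> 1 + (- W $ 1 $ 0 * W $ 2 $ 2 * xv \<xi> 1 + W $ 1 $ 1 * W $ 2 $ 2 * xv \<xi> 0 + W $ 1 $ 2 * W $ 2 $ 0 * xv \<xi> 1 - W $ 1 $ 2 * W $ 2 $ 1 * xv \<xi> 0) * Ky \<xi> \<Psi> 2"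
  unfolding core_def sgn4_def Kx_def Ky_def trL_def Xm_def entry3 Lm_def adjM_def
  by (simp add: sum_3 thd_def t3 algebra_simps)

lemma core_21: "core W \<xi> \<Psi> 2 1 = (W $ 0 $ 0 * W $ 1 $ 1 * yv \<xi> 2 - W $ 0 $ 0 * W $ 2 $ 1 * yv \<xi> 1 - W $ 0 $ 1 * W $ 1 $ 0 * yv \<xi> 2 + W $ 0 $ 1 * W $ 2 $ 0 * yv \<xi> 1 + W $ 1 $ 0 * W $ 2 $ 1 * yv \<xi> 0 - W $ 1 $ 1 * W $ 2 $ 0 * yv \<xi> 0) * Kx \<xi> \<Psi> 1 + (- W $ 0 $ 0 * W $ 2 $ 1 * xv \<xi> 0 + W $ 0 $ 1 * W $ 2 $ 0 * xv \<xi> 0) * Ky \<xi> \<Psi> 0 + (W $ 0 $ 0 * W $ 2 $ 1 * xv \<xi> 1 - W $ 0 $ 1 * W $ 2 $ 0 * xv \<xi> 1) * Ky \<xi> \<Psi> 1 + (- W $ 0 $ 0 * W $ 2 $ 2 * xv \<xi> 1 + W $ 0 $ 1 * W $ 2 $ 2 * xv \<xi> 0 + W $ 0 $ 2 * W $ 2 $ 0 * xv \<xi> 1 - W $ 0 $ 2 * W $ 2 $ 1 * xv \<xi> 0) * Ky \<xi> \<Psi> 2"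
  unfolding core_def sgn4_def Kx_def Ky_def trL_def Xm_def entry3 Lm_def adjM_def
  by (simp add: sum_3 thd_def t3 algebra_simps)

lemma core_22: "core W \<xi> \<Psi> 2 2 = (W $ 0 $ 0 * W $ 1 $ 1 * yv \<xi> 2 - W $ 0 $ 0 * W $ 2 $ 1 * yv \<xi> 1 - W $ 0 $ 1 * W $ 1 $ 0 * yv \<xi> 2 + W $ 0 $ 1 * W $ 2 $ 0 * yv \<xi> 1 + W $ 1 $ 0 * W $ 2 $ 1 * yv \<xi> 0 - W $ 1 $ 1 * W $ 2 $ 0 * yv \<xi> 0) * Kx \<xi> \<Psi> 2 + (- W $ 0 $ 0 * W $ 1 $ 1 * xv \<xi> 0 + W $ 0 $ 1 * W $ 1 $ 0 * xv \<xi> 0) * Ky \<xi> \<Psi> 0 + (W $ 0 $ 0 * W $ 1 $ 1 * xv \<xi> 1 - W $ 0 $ 1 * W $ 1 $ 0 * xv \<xi> 1) * Ky \<xi> \<Psi> 1 + (- W $ 0 $ 0 * W $ 1 $ 2 * xv \<xi> 1 + W $ 0 $ 1 * W $ 1 $ 2 * xv \<xi> 0 + W $ 0 $ 2 * W $ 1 $ 0 * xv \<xi> 1 - W $ 0 $ 2 * W $ 1 $ 1 * xv \<xi> 0) * Ky \<xi> \<Psi> 2"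
  unfolding core_def sgn4_def Kx_def Ky_def trL_def Xm_def entry3 Lm_def adjM_def
  by (simp add: sum_3 thd_def t3 algebra_simps)

lemma sh_1n: "shuffle_sign {toN a} (nset a b) = (-1) ^ (toN a)"
proof -
  have "a = 1 \<or> a = 2 \<or> a = 3" "b = 1 \<or> b = 2 \<or> b = 3" by (rule exhaust_3)+
  then show ?thesis
    by (elim disjE) (simp_all add: nset_def eset_def top_eq insert_Diff_if shuffle_sign_eval)
qed

lemma sh_3n: "shuffle_sign {toN e + 3} (nset a e) = (-1) ^ (toN e)"
proof -
  have "a = 1 \<or> a = 2 \<or> a = 3" "e = 1 \<or> e = 2 \<or> e = 3" by (rule exhaust_3)+
  then show ?thesis
    by (elim disjE) (simp_all add: nset_def eset_def top_eq insert_Diff_if shuffle_sign_eval)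
qed

lemma Kx_zero:
  assumes hx: "has_bidegree 1 0 \<xi>" and w: "wedge \<xi> \<Psi> = (\<lambda>_. 0)"
  shows "Kx \<xi> \<Psi> b = 0"
proof -
  let ?U = "{0..<6} - {toN b + 3}"
  have "wedge \<xi> \<Psi> ?U = (\<Sum>a\<in>UNIV. if {toN a} \<subseteq> ?U then
      shuffle_sign {toN a} (?U - {toN a}) * \<xi> {toN a} * \<Psi> (?U - {toN a}) else 0)"
    by (rule wedge10) (use bideg10_supp[OF hx] inj_toN in auto)
  also have "\<dots> = Kx \<xi> \<Psi> b" unfolding Kx_def
  proof (intro sum.cong refl)
    fix a
    have lt: "toN a < 3" "toN b < 3" by simp_all
    have "toN a < 6" "toN a \<noteq> toN b + 3" using lt by linarith+
    then have s: "{toN a} \<subseteq> ?U" by simp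
    have d: "?U - {toN a} = nset a b" unfolding nset_def eset_def by auto
    show "(if {toN a} \<subseteq> ?U then shuffle_sign {toN a} (?U - {toN a}) * \<xi> {toN a} * \<Psi> (?U - {toN a}) else 0)
        = (-1) ^ toN a * xv \<xi> a * pp \<Psi> a b"
      using s unfolding d by (simp add: sh_1n xv_def pp_def)
  qed
  finally show ?thesis using w by simp
qed

lemma Ky_zero:
  assumes hx: "has_bidegree 1 0 \<xi>" and w: "wedge (conjf \<xi>) \<Psi> = (\<lambda>_. 0)"
  shows "Ky \<xi> \<Psi> a = 0"
proof -
  let ?V = "{0..<6} - {toN a}"
  have inj: "inj (\<lambda>e. toN e + 3)" by (simp add: inj_def)
  have "wedge (conjf \<xi>) \<Psi> ?V = (\<Sum>e\<in>UNIV. if {toN e + 3} \<subseteq> ?V then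
      shuffle_sign {toN e + 3} (?V - {toN e + 3}) * conjf \<xi> {toN e + 3} * \<Psi> (?V - {toN e + 3}) else 0)"
    by (rule wedge10[of "conjf \<xi>" "\<lambda>e. toN e + 3"]) (use conjf_supp1[OF hx] inj in auto)
  also have "\<dots> = Ky \<xi> \<Psi> a" unfolding Ky_def
  proof (intro sum.cong refl)
    fix e
    have lt: "toN a < 3" "toN e < 3" by simp_all
    have "toN e + 3 < 6" "toN e + 3 \<noteq> toN a" using lt by linarith+
    then have s: "{toN e + 3} \<subseteq> ?V" by simp
    have d: "?V - {toN e + 3} = nset a e" unfolding nset_def eset_def by auto
    show "(if {toN e + 3} \<subseteq> ?V then shuffle_sign {toN e + 3} (?V - {toN e + 3}) * conjf \<xi> {toN e + 3} * \<Psi> (?V - {toN e + 3}) else 0)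
        = (-1) ^ toN e * yv \<xi> e * pp \<Psi> a e"
      using s unfolding d by (simp add: sh_3n yv_def pp_def conjf_single)
  qed
  finally show ?thesis using w by simp
qed

lemma core_zero:
  assumes "\<And>b. Kx \<xi> \<Psi> b = 0" "\<And>a. Ky \<xi> \<Psi> a = 0"
  shows "core W \<xi> \<Psi> a b = 0"
proof -
  have "a = 1 \<or> a = 2 \<or> a = 3" "b = 1 \<or> b = 2 \<or> b = 3" by (rule exhaust_3)+
  then show ?thesis
    by (elim disjE) (simp_all add: core_00 core_01 core_02 core_10 core_11 core_12 core_20 core_21 core_22 assms)
qed

lemma ip_ch0:
  assumes herm: "hermitian_metric W" and rf: "real_form \<Psi>"
  shows "inner11 W (ch0 W \<Psi>) (omega W) = trL W \<Psi> / det W"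
proof -
  let ?G = "GI W" and ?X = "Xm W \<Psi>" and ?d = "det W"
  have c: "cnj (\<i> * W $ e $ c) = - \<i> * W $ c $ e" for c e using herm_entry[OF herm] by simp
  have "inner11 W (ch0 W \<Psi>) (omega W) = (\<Sum>a\<in>UNIV. \<Sum>b\<in>UNIV. \<Sum>c\<in>UNIV. \<Sum>e\<in>UNIV.
      ?G $ a $ c * ?G $ e $ b * (\<i> / ?d * ?X $ b $ a) * (- \<i> * W $ c $ e))"
    unfolding inner11_alt ch0_def omega_mk mk11_val c ..
  also have "\<dots> = (\<i> / ?d * - \<i>) * (\<Sum>a\<in>UNIV. \<Sum>b\<in>UNIV. ?X $ b $ a * (?G ** W ** ?G) $ a $ b)"
    unfolding entry3 by (simp add: sum_distrib_left mult_ac)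
  also have "?G ** W ** ?G = ?G" using GI_inv[OF herm] by simp
  also have "(\<Sum>a\<in>UNIV. \<Sum>b\<in>UNIV. ?X $ b $ a * ?G $ a $ b) = (\<Sum>a\<in>UNIV. (?G ** ?X) $ a $ a)"
    by (simp add: matrix_matrix_mult_def mult_ac)
  also have "?G ** ?X = Lm \<Psi> ** W"
  proof -
    have "?G ** ?X = (?G ** W) ** Lm \<Psi> ** W" unfolding Xm_def by (simp add: matrix_mul_assoc)
    then show ?thesis using GI_inv[OF herm] by simp
  qed
  also have "(\<Sum>a\<in>UNIV. (Lm \<Psi> ** W) $ a $ a) = trL W \<Psi>"
    unfolding trL_def by (simp add: matrix_matrix_mult_def)
  finally show ?thesis by (simp add: field_simps)
qed

lemma covec_s:
  assumes herm: "hermitian_metric W"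
  shows "complex_of_real (covec_norm2 W \<xi>) = (\<Sum>a\<in>UNIV. \<Sum>b\<in>UNIV. GI W $ a $ b * xv \<xi> a * yv \<xi> b)"
proof -
  define s where "s = (\<Sum>a\<in>UNIV. \<Sum>b\<in>UNIV. GI W $ a $ b * xv \<xi> a * yv \<xi> b)"
  have "cnj s = (\<Sum>a\<in>UNIV. \<Sum>b\<in>UNIV. GI W $ b $ a * yv \<xi> a * xv \<xi> b)"
    unfolding s_def by (simp add: G_herm[OF herm] xv_def yv_def)
  also have "\<dots> = (\<Sum>b\<in>UNIV. \<Sum>a\<in>UNIV. GI W $ b $ a * yv \<xi> a * xv \<xi> b)" by (rule sum.swap)
  also have "\<dots> = s" unfolding s_def by (simp add: mult_ac)
  finally have "cnj s = s" .
  then have "Im (cnj s) = Im s" by simp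
  then have "Im s = 0" by simp
  then have "complex_of_real (Re s) = s" by (simp add: complex_eq_iff)
  moreover have "covec_norm2 W \<xi> = Re s" unfolding covec_alt s_def xv_def yv_def ..
  ultimately show ?thesis unfolding s_def by simp
qed

lemma adjsum:
  assumes herm: "hermitian_metric W"
  shows "det W * (\<Sum>a\<in>UNIV. \<Sum>b\<in>UNIV. GI W $ a $ b * xv \<xi> a * yv \<xi> b)
       = (\<Sum>f\<in>UNIV. \<Sum>g\<in>UNIV. adjM W $ f $ g * xv \<xi> f * yv \<xi> g)"
  by (simp add: adj_G[OF herm, symmetric] sum_distrib_left mult_ac)

theorem lemma2:
  fixes W :: "complex^3^3" and \<Omega> :: complex and \<xi> \<delta>\<Psi> :: cform
  assumes "hermitian_metric W"
    and "\<Omega> \<noteq> 0"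
    and "has_bidegree 1 0 \<xi>"
    and "has_bidegree 2 2 \<delta>\<Psi>"
    and "real_form \<delta>\<Psi>"
    and "wedge \<xi> \<delta>\<Psi> = (\<lambda>_. 0)"
    and "wedge (conjf \<xi>) \<delta>\<Psi> = (\<lambda>_. 0)"
  shows "smult \<i> (wedge (wedge \<xi> (conjf \<xi>)) (tstar W \<Omega> \<delta>\<Psi>))
       = smult (complex_of_real (covec_norm2 W \<xi>) / (2 * complex_of_real (Omega_norm W \<Omega>))) \<delta>\<Psi>"
proof -
  note herm = assms(1) and hx = assms(3) and b22 = assms(4) and rf = assms(5)
  define N where "N = complex_of_real (Omega_norm W \<Omega>)"
  define k where "k = 1 / (2 * N)"
  define d where "d = det W"
  define \<Lambda> where "\<Lambda> = wedge \<xi> (conjf \<xi>)"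
  define \<tau> where "\<tau> = tstar W \<Omega> \<delta>\<Psi>"
  define s where "s = (\<Sum>a\<in>UNIV. \<Sum>b\<in>UNIV. GI W $ a $ b * xv \<xi> a * yv \<xi> b)"
  define adjs where "adjs = (\<Sum>f\<in>UNIV. \<Sum>g\<in>UNIV. adjM W $ f $ g * xv \<xi> f * yv \<xi> g)"
  have dnz: "d \<noteq> 0" unfolding d_def using herm_det_nz[OF herm] .
  have ds: "d * s = adjs" unfolding d_def s_def adjs_def by (rule adjsum[OF herm])
  have n2: "complex_of_real (covec_norm2 W \<xi>) = s" unfolding s_def by (rule covec_s[OF herm])
  have tau: "\<tau> = smult k (\<lambda>S. trL W \<delta>\<Psi> / d * omega W S - ch0 W \<delta>\<Psi> S)"
    unfolding \<tau>_def tstar_def hodge_eq[OF herm b22 rf] ip_ch0[OF herm rf] k_def N_def d_def ..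
  have tau_val: "\<tau> (eset l m) = k * (\<i> / d) * (trL W \<delta>\<Psi> * W $ m $ l - Xm W \<delta>\<Psi> $ m $ l)" for l m
    unfolding tau smult_def omega_mk ch0_def mk11_val d_def by (simp add: algebra_simps)
  have tau_bideg: "has_bidegree 1 1 \<tau>"
    unfolding has_bidegree_iff
  proof (intro allI impI)
    fix S assume "\<tau> S \<noteq> 0"
    then have "omega W S \<noteq> 0 \<or> ch0 W \<delta>\<Psi> S \<noteq> 0" unfolding tau smult_def by auto
    then show "setbideg 1 1 S"
      using omega_bideg[of W] mk11_bideg[of "\<lambda>a b. \<i> / det W * Xm W \<delta>\<Psi> $ b $ a"]
      unfolding has_bidegree_iff ch0_def by blast
  qed
  have Lam: "has_bidegree 1 1 \<Lambda>" unfolding \<Lambda>_def by (rule Lam_bideg[OF hx])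
  have core0: "core W \<xi> \<delta>\<Psi> a b = 0" for a b
    by (rule core_zero) (use Kx_zero[OF hx assms(6)] Ky_zero[OF hx assms(7)] in auto)
  show ?thesis
    unfolding \<Lambda>_def[symmetric] \<tau>_def[symmetric] smult_def N_def[symmetric] n2
  proof (rule ext)
    fix S
    show "\<i> * wedge \<Lambda> \<tau> S = s / (2 * N) * \<delta>\<Psi> S"
    proof (cases "\<exists>a b. S = nset a b")
      case True
      then obtain a b where S: "S = nset a b" by blast
      let ?T = "(\<Sum>c\<in>UNIV. \<Sum>e\<in>UNIV. if c \<noteq> a \<and> e \<noteq> b then
        sgn4 a b c e * (xv \<xi> c * yv \<xi> e) * (trL W \<delta>\<Psi> * W $ (thd b e) $ (thd a c) - Xm W \<delta>\<Psi> $ (thd b e) $ (thd a c)) else 0)"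
      have pw: "(if c \<noteq> a \<and> e \<noteq> b then shuffle_sign (eset c e) (eset (thd a c) (thd b e)) * \<Lambda> (eset c e) * \<tau> (eset (thd a c) (thd b e)) else 0)
          = k * (\<i> / d) * (if c \<noteq> a \<and> e \<noteq> b then
        sgn4 a b c e * (xv \<xi> c * yv \<xi> e) * (trL W \<delta>\<Psi> * W $ (thd b e) $ (thd a c) - Xm W \<delta>\<Psi> $ (thd b e) $ (thd a c)) else 0)" for c e
        unfolding \<Lambda>_def Lam_val[OF hx] tau_val sh_ee sgn4_def xv_def yv_def by simp
      have w: "wedge \<Lambda> \<tau> S = k * (\<i> / d) * ?T"
        unfolding S wedge_nset[OF Lam] pw sum_distrib_left ..
      have c: "?T + adjs * pp \<delta>\<Psi> a b = 0"
        using core0[of a b] unfolding core_def adjs_def .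
      have T: "?T = - (adjs * pp \<delta>\<Psi> a b)"
        using c by (simp add: eq_neg_iff_add_eq_0)
      have "\<i> * wedge \<Lambda> \<tau> S = k * adjs * pp \<delta>\<Psi> a b / d"
        unfolding w T by (simp add: field_simps)
      also have "\<dots> = s / (2 * N) * \<delta>\<Psi> S"
        unfolding S pp_def k_def ds[symmetric] using dnz by (simp add: field_simps)
      finally show ?thesis .
    next
      case False
      have "\<delta>\<Psi> S = 0"
      proof (rule ccontr)
        assume "\<delta>\<Psi> S \<noteq> 0"
        then have "setbideg 2 2 S" using b22 unfolding has_bidegree_iff by blast
        then show False using False setbideg22 by blast
      qed
      moreover have "wedge \<Lambda> \<tau> S = 0"
      proof (rule ccontr)
        assume "wedge \<Lambda> \<tau> S \<noteq> 0"
        moreover have "has_bidegree (1 + 1) (1 + 1) (wedge \<Lambda> \<tau>)" by (rule wedge_bideg[OF Lam tau_bideg])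
        ultimately have "setbideg 2 2 S" unfolding has_bidegree_iff by (simp add: numeral_2_eq_2)
        then show False using False setbideg22 by blast
      qed
      ultimately show ?thesis by simp
    qed
  qed
qed

end
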